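(* Let $\mathbb F_q$ be a finite field with $q$ elements, let $n\ge 2$, let $a_1,\dots,a_n,b\in\mathbb F_q^*$ and let $k,k_1,\dots,k_n,m_1,\dots,m_n$ be positive integers. Let $N_q$ be the number of solutions $(x_1,\dots,x_n)\in\mathbb F_q^n$ of $$(a_1x_1^{m_1}+\dots+a_nx_n^{m_n})^k=bx_1^{k_1}\cdots x_n^{k_n},$$ let $N_q(0)$ and $N_q^*(0)$ be the numbers of solutions of $a_1x_1^{m_1}+\dots+a_nx_n^{m_n}=0$ in $\mathbb F_q^n$ and in $(\mathbb F_q^* )^n$ respectively, and let $k_0=\gcd(k,k_1,\dots,k_n,q-1)$. If $b$ is not a $k_0$th power in $\mathbb F_q$, then $N_q=N_q(0)-N_q^*(0)$. If $b$ is a $k_0$th power in $\mathbb F_q$, then $$N_q=k_0(q-1)^{n-1}+N_q(0)-\frac{k_0+q-1}{q-1}\,N_q^*(0)+\sum_{\psi^{k_0}\ne\varepsilon}\psi(b)T(\psi),$$ where the sum is over all multiplicative characters $\psi$ of $\mathbb F_q$ whose order does not divide $k_0$.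
   Context: $\varepsilon$ denotes the trivial multiplicative character of $\mathbb F_q$. A multiplicative character $\psi$ is extended to $\mathbb F_q$ by $\psi(0)=1$ if $\psi$ is trivial and $\psi(0)=0$ otherwise. For a multiplicative character $\psi$, $$T(\psi)=\frac1{q-1}\sum_{\substack{x_1,\dots,x_n\in\mathbb F_q^*\\ a_1x_1^{m_1}+\dots+a_nx_n^{m_n}\ne0}}\psi^{k_1}(x_1)\cdots\psi^{k_n}(x_n)\,\bar\psi^{k}(a_1x_1^{m_1}+\dots+a_nx_n^{m_n}).$$ *)

theory Defs
  imports Complex_Main "HOL-Library.FuncSet"
begin

text \<open>Multiplicative characters of a finite field, extended to 0 by the convention
  psi(0) = 1 if psi is trivial and psi(0) = 0 otherwise.\<close>
definition mult_char :: "('a::field \<Rightarrow> complex) \<Rightarrow> bool" where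
  "mult_char \<psi> \<longleftrightarrow>
     (\<forall>x y. x \<noteq> 0 \<longrightarrow> y \<noteq> 0 \<longrightarrow> \<psi> (x * y) = \<psi> x * \<psi> y) \<and>
     (\<forall>x. x \<noteq> 0 \<longrightarrow> \<psi> x \<noteq> 0) \<and>
     \<psi> 0 = (if (\<forall>x. x \<noteq> 0 \<longrightarrow> \<psi> x = 1) then 1 else 0)"

text \<open>The diagonal form a_1 x_1^{m_1} + ... + a_n x_n^{m_n} (indices 0..n-1).\<close>
definition diag_form :: "nat \<Rightarrow> (nat \<Rightarrow> 'a::field) \<Rightarrow> (nat \<Rightarrow> nat) \<Rightarrow> (nat \<Rightarrow> 'a) \<Rightarrow> 'a" where
  "diag_form n a m x = (\<Sum>i<n. a i * x i ^ m i)"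

definition T_sum :: "nat \<Rightarrow> (nat \<Rightarrow> 'a::{field,finite}) \<Rightarrow> (nat \<Rightarrow> nat) \<Rightarrow> (nat \<Rightarrow> nat) \<Rightarrow> nat
    \<Rightarrow> ('a \<Rightarrow> complex) \<Rightarrow> complex" where
  "T_sum n a m kk k \<psi> =
     (1 / (of_nat (card (UNIV :: 'a set)) - 1)) *
     (\<Sum>x \<in> {x \<in> Pi\<^sub>E {..<n} (\<lambda>_. UNIV - {0}). diag_form n a m x \<noteq> 0}.
        (\<Prod>i<n. \<psi> (x i) ^ kk i) * cnj (\<psi> (diag_form n a m x)) ^ k)"

end

theory Submission imports Defs "HOL-Algebra.Multiplicative_Group" begin
definition cfr :: "'a::field ring" where
  "cfr = \<lparr> carrier = UNIV, mult = (*), one = 1, zero = 0, add = (+) \<rparr>"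

lemma cfr_cring: "cring (cfr :: 'a::field ring)"
proof (rule cringI)
  show "abelian_group (cfr::'a ring)"
  proof (rule abelian_groupI)
    fix x :: 'a
    show "\<exists>y\<in>carrier cfr. y \<oplus>\<^bsub>cfr\<^esub> x = \<zero>\<^bsub>cfr\<^esub>"
      by (rule bexI[of _ "- x"]) (simp_all add: cfr_def)
  qed (simp_all add: cfr_def add.assoc add.commute)
  show "comm_monoid (cfr::'a ring)"
    by (rule comm_monoidI) (simp_all add: cfr_def mult.assoc mult.commute)
  fix x y z :: 'a
  show "(x \<oplus>\<^bsub>cfr\<^esub> y) \<otimes>\<^bsub>cfr\<^esub> z = x \<otimes>\<^bsub>cfr\<^esub> z \<oplus>\<^bsub>cfr\<^esub> y \<otimes>\<^bsub>cfr\<^esub> z"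
    by (simp add: cfr_def distrib_right)
qed

lemma cfr_field: "field (cfr :: 'a::field ring)"
proof -
  interpret cring "cfr :: 'a ring" by (rule cfr_cring)
  show ?thesis
  proof (rule cring_fieldI2)
    show "\<zero>\<^bsub>cfr\<^esub> \<noteq> \<one>\<^bsub>(cfr::'a ring)\<^esub>" by (simp add: cfr_def)
    fix a :: 'a assume "a \<in> carrier cfr" "a \<noteq> \<zero>\<^bsub>cfr\<^esub>"
    hence "a \<noteq> 0" by (simp add: cfr_def)
    thus "\<exists>b\<in>carrier cfr. a \<otimes>\<^bsub>cfr\<^esub> b = \<one>\<^bsub>cfr\<^esub>"
      by (intro bexI[of _ "inverse a"]) (simp_all add: cfr_def)
  qed
qed

lemma cfr_pow: "x [^]\<^bsub>(cfr :: 'a::field ring)\<^esub> (i::nat) = x ^ i"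
  by (induct i) (simp_all add: cfr_def)

lemma gen_exists:
  "\<exists>g::'a::{field,finite}. g \<noteq> 0 \<and> UNIV - {0} = {g ^ i | i. i \<in> (UNIV :: nat set)}"
proof -
  interpret field "cfr :: 'a ring" by (rule cfr_field)
  have "finite (carrier (cfr :: 'a ring))" by (simp add: cfr_def)
  from finite_field_mult_group_has_gen[OF this] obtain g where
    g: "g \<in> carrier (mult_of (cfr::'a ring))"
    "carrier (mult_of (cfr::'a ring)) = {g[^]\<^bsub>cfr\<^esub> i | i::nat . i \<in> UNIV}" by (rule bexE)
  have c: "carrier (mult_of (cfr::'a ring)) = UNIV - {0}" by (simp add: cfr_def)
  have pw: "g[^]\<^bsub>(cfr::'a ring)\<^esub> (i::nat) = g ^ i" for i
    by (rule cfr_pow)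
  have "g \<noteq> 0" using g(1) unfolding c by simp
  moreover have "UNIV - {0} = {g ^ i | i. i \<in> (UNIV :: nat set)}" using g(2) unfolding c pw .
  ultimately show ?thesis by blast
qed

lemma card_ge2: "card (UNIV :: 'a::{field,finite} set) \<ge> 2"
proof -
  have "{0,1::'a} \<subseteq> UNIV" by simp
  hence "card {0,1::'a} \<le> card (UNIV::'a set)" by (rule card_mono[OF finite_UNIV])
  thus ?thesis by simp
qed

lemma card_nz: "card (UNIV - {0::'a::{field,finite}}) = card (UNIV::'a set) - 1"
  by (simp add: card_Diff_singleton)

lemma fermat:
  fixes x :: "'a::{field,finite}"
  assumes "x \<noteq> 0"
  shows "x ^ (card (UNIV::'a set) - 1) = 1"
proof -
  let ?U = "UNIV - {0::'a}"
  have inj: "inj_on (\<lambda>y. x * y) ?U"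
  proof (rule inj_onI)
    fix y z assume "x * y = x * z" thus "y = z" using assms by simp
  qed
  have im: "(\<lambda>y. x * y) ` ?U = ?U"
  proof
    show "(\<lambda>y. x * y) ` ?U \<subseteq> ?U"
    proof
      fix w assume "w \<in> (\<lambda>y. x * y) ` ?U"
      then obtain y where "y \<in> ?U" "w = x * y" by blast
      thus "w \<in> ?U" using assms by simp
    qed
    show "?U \<subseteq> (\<lambda>y. x * y) ` ?U"
    proof
      fix y assume y: "y \<in> ?U"
      have "y = x * (y / x)" using assms by simp
      moreover have "y / x \<in> ?U" using y assms by simp
      ultimately show "y \<in> (\<lambda>y. x * y) ` ?U" by (rule image_eqI)
    qed
  qed
  have bij: "bij_betw (\<lambda>y. x * y) ?U ?U" using inj im unfolding bij_betw_def by (intro conjI)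
  have e1: "(\<Prod>y\<in>?U. x * y) = (\<Prod>y\<in>?U. y)"
    by (rule prod.reindex_bij_betw[OF bij, of "\<lambda>y. y"])
  have e2: "(\<Prod>y\<in>?U. x * y) = x ^ card ?U * (\<Prod>y\<in>?U. y)"
    by (simp only: prod.distrib prod_constant)
  have nz: "(\<Prod>y\<in>?U. y) \<noteq> 0"
  proof
    assume "(\<Prod>y\<in>?U. y) = 0"
    then obtain y where "y \<in> ?U" "y = 0" using prod_zero_iff[of ?U "\<lambda>y. y"] by auto
    thus False by simp
  qed
  have "(\<Prod>y\<in>?U. y) = x ^ card ?U * (\<Prod>y\<in>?U. y)" using e1 e2 by simp
  hence "(\<Prod>y\<in>?U. y) = 0 \<or> x ^ card ?U = 1" by (simp only: mult_cancel_right1)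
  hence "x ^ card ?U = 1" using nz by blast
  thus ?thesis by (simp only: card_nz)
qed

definition gen :: "'a::{field,finite}" where
  "gen = (SOME g. g \<noteq> 0 \<and> UNIV - {0} = {g ^ i | i. i \<in> (UNIV :: nat set)})"

lemma gen_prop: "(gen::'a::{field,finite}) \<noteq> 0 \<and> UNIV - {0::'a} = {gen ^ i | i. i \<in> (UNIV :: nat set)}"
  unfolding gen_def by (rule someI_ex[OF gen_exists])

lemma gen_nz: "(gen::'a::{field,finite}) \<noteq> 0" using gen_prop by blast

lemma gen_pow_mod: "(gen::'a::{field,finite}) ^ i = gen ^ (i mod (card (UNIV::'a set) - 1))"
proof -
  have "(gen::'a) ^ i = gen ^ ((card (UNIV::'a set) - 1) * (i div (card (UNIV::'a set) - 1)) + i mod (card (UNIV::'a set) - 1))"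
    by (simp only: mult_div_mod_eq)
  also have "\<dots> = gen ^ (i mod (card (UNIV::'a set) - 1))"
    by (simp only: power_add power_mult fermat[OF gen_nz] power_one mult_1)
  finally show ?thesis .
qed

lemma gen_image: "(\<lambda>i. (gen::'a::{field,finite}) ^ i) ` {..<card (UNIV::'a set) - 1} = UNIV - {0}"
proof
  show "(\<lambda>i. (gen::'a) ^ i) ` {..<card (UNIV::'a set) - 1} \<subseteq> UNIV - {0}" using gen_nz by auto
  show "UNIV - {0} \<subseteq> (\<lambda>i. (gen::'a) ^ i) ` {..<card (UNIV::'a set) - 1}"
  proof
    fix x :: 'a assume "x \<in> UNIV - {0}"
    then obtain i where "x = gen ^ i" using gen_prop by blast
    hence "x = gen ^ (i mod (card (UNIV::'a set) - 1))" using gen_pow_mod[of i] by (rule trans)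
    moreover have "i mod (card (UNIV::'a set) - 1) < card (UNIV::'a set) - 1" using card_ge2[where 'a='a] by simp
    ultimately show "x \<in> (\<lambda>i. (gen::'a) ^ i) ` {..<card (UNIV::'a set) - 1}" by blast
  qed
qed

lemma gen_inj: "inj_on (\<lambda>i. (gen::'a::{field,finite}) ^ i) {..<card (UNIV::'a set) - 1}"
proof (rule eq_card_imp_inj_on)
  show "card ((\<lambda>i. (gen::'a) ^ i) ` {..<card (UNIV::'a set) - 1}) = card {..<card (UNIV::'a set) - 1}"
    by (simp only: gen_image card_nz card_lessThan)
qed simp

lemma gen_pow_eq: "((gen::'a::{field,finite}) ^ i = gen ^ j) \<longleftrightarrow> i mod (card (UNIV::'a set) - 1) = j mod (card (UNIV::'a set) - 1)"
proof -
  have lt: "m mod (card (UNIV::'a set) - 1) < card (UNIV::'a set) - 1" for m using card_ge2[where 'a='a] by simp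
  have "((gen::'a) ^ i = gen ^ j) \<longleftrightarrow> (gen::'a) ^ (i mod (card (UNIV::'a set) - 1)) = gen ^ (j mod (card (UNIV::'a set) - 1))"
    by (simp only: gen_pow_mod[of i] gen_pow_mod[of j])
  also have "\<dots> \<longleftrightarrow> i mod (card (UNIV::'a set) - 1) = j mod (card (UNIV::'a set) - 1)"
  proof
    assume "(gen::'a) ^ (i mod (card (UNIV::'a set) - 1)) = gen ^ (j mod (card (UNIV::'a set) - 1))"
    from inj_onD[OF gen_inj this] lt show "i mod (card (UNIV::'a set) - 1) = j mod (card (UNIV::'a set) - 1)" by simp
  qed simp
  finally show ?thesis .
qed

definition dlog :: "'a::{field,finite} \<Rightarrow> nat" where
  "dlog x = (THE i. i < card (UNIV::'a set) - 1 \<and> gen ^ i = x)"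

lemma dlog: assumes "(x::'a::{field,finite}) \<noteq> 0"
  shows "dlog x < card (UNIV::'a set) - 1" "gen ^ dlog x = x"
proof -
  have "x \<in> (\<lambda>i. (gen::'a) ^ i) ` {..<card (UNIV::'a set) - 1}" unfolding gen_image using assms by simp
  then obtain i where i: "i < card (UNIV::'a set) - 1" "gen ^ i = x" by auto
  have uniq: "j = i" if "j < card (UNIV::'a set) - 1" "gen ^ j = x" for j
  proof -
    have "(\<lambda>i. (gen::'a) ^ i) j = (\<lambda>i. (gen::'a) ^ i) i" using that(2) i(2) by simp
    thus "j = i" by (rule inj_onD[OF gen_inj]) (use that(1) i(1) in simp_all)
  qed
  have "\<exists>!i. i < card (UNIV::'a set) - 1 \<and> gen ^ i = x"
    using i uniq by blast
  from theI'[OF this] show "dlog x < card (UNIV::'a set) - 1" "gen ^ dlog x = x" unfolding dlog_def by auto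
qed

lemma root_pow_mod: assumes "(z::complex) ^ Q = 1" shows "z ^ i = z ^ (i mod Q)"
proof -
  have "z ^ i = z ^ (Q * (i div Q) + i mod Q)" by (simp only: mult_div_mod_eq)
  also have "\<dots> = z ^ (i mod Q)" by (simp only: power_add power_mult assms power_one mult_1)
  finally show ?thesis .
qed


lemma mc_mult: "mult_char \<psi> \<Longrightarrow> x \<noteq> 0 \<Longrightarrow> y \<noteq> 0 \<Longrightarrow> \<psi> (x * y) = \<psi> x * \<psi> y"
  unfolding mult_char_def by blast

lemma mc_nz: "mult_char \<psi> \<Longrightarrow> x \<noteq> 0 \<Longrightarrow> \<psi> x \<noteq> 0"
  unfolding mult_char_def by blast

lemma mc_one: assumes "mult_char \<psi>" shows "\<psi> 1 = 1"
proof -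
  show ?thesis using mc_mult[OF assms, of 1 1] mc_nz[OF assms, of 1] by simp
qed

lemma mc_pow: assumes "mult_char \<psi>" "x \<noteq> 0" shows "\<psi> (x ^ j) = \<psi> x ^ j"
proof (induct j)
  case 0 show ?case by (simp only: power_0 mc_one[OF assms(1)])
next
  case (Suc j)
  have xj: "x ^ j \<noteq> 0" using assms(2) by (rule power_not_zero)
  have "\<psi> (x ^ Suc j) = \<psi> (x * x ^ j)" by (simp only: power_Suc)
  also have "\<dots> = \<psi> x * \<psi> (x ^ j)" by (rule mc_mult[OF assms(1) assms(2) xj])
  also have "\<dots> = \<psi> x * \<psi> x ^ j" by (simp only: Suc)
  also have "\<dots> = \<psi> x ^ Suc j" by (simp only: power_Suc)
  finally show ?case .
qed

lemma mc_inverse: assumes "mult_char \<psi>" "x \<noteq> 0" shows "\<psi> (inverse x) = inverse (\<psi> x)"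
proof -
  have ix: "inverse x \<noteq> 0" using assms(2) by simp
  have "\<psi> (x * inverse x) = \<psi> x * \<psi> (inverse x)" by (rule mc_mult[OF assms(1) assms(2) ix])
  moreover have "x * inverse x = 1" using assms(2) by (rule right_inverse)
  ultimately have "\<psi> x * \<psi> (inverse x) = \<psi> 1" by (simp only:)
  hence "\<psi> x * \<psi> (inverse x) = 1" by (simp only: mc_one[OF assms(1)])
  thus ?thesis by (rule inverse_unique[symmetric])
qed

lemma mc_prod: assumes "mult_char \<psi>" "finite I" "\<forall>i\<in>I. f i \<noteq> 0"
  shows "\<psi> (\<Prod>i\<in>I. f i) = (\<Prod>i\<in>I. \<psi> (f i))"
  using assms(2,3)
proof (induct I rule: finite_induct)
  case empty show ?case by (simp only: prod.empty mc_one[OF assms(1)])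
next
  case (insert i I)
  have fI: "\<forall>j\<in>I. f j \<noteq> 0" using insert.prems by blast
  have fi: "f i \<noteq> 0" using insert.prems by blast
  have nz: "(\<Prod>i\<in>I. f i) \<noteq> 0"
  proof
    assume "(\<Prod>i\<in>I. f i) = 0"
    then obtain j where "j \<in> I" "f j = 0" using prod_zero_iff[OF insert.hyps(1)] by blast
    thus False using fI by blast
  qed
  have "\<psi> (\<Prod>i\<in>insert i I. f i) = \<psi> (f i * (\<Prod>i\<in>I. f i))"
    by (simp only: prod.insert[OF insert.hyps(1,2)])
  also have "\<dots> = \<psi> (f i) * \<psi> (\<Prod>i\<in>I. f i)" by (rule mc_mult[OF assms(1) fi nz])
  also have "\<dots> = \<psi> (f i) * (\<Prod>i\<in>I. \<psi> (f i))" by (simp only: insert.hyps(3)[OF fI])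
  also have "\<dots> = (\<Prod>i\<in>insert i I. \<psi> (f i))" by (simp only: prod.insert[OF insert.hyps(1,2)])
  finally show ?case .
qed

lemma mc_root: assumes "mult_char \<psi>" "(x::'a::{field,finite}) \<noteq> 0"
  shows "\<psi> x ^ (card (UNIV::'a set) - 1) = 1"
proof -
  have "\<psi> x ^ (card (UNIV::'a set) - 1) = \<psi> (x ^ (card (UNIV::'a set) - 1))" by (rule mc_pow[OF assms, symmetric])
  also have "\<dots> = \<psi> 1" by (simp only: fermat[OF assms(2)])
  finally show ?thesis using mc_one[OF assms(1)] by simp
qed

lemma mc_norm: assumes "mult_char \<psi>" "(x::'a::{field,finite}) \<noteq> 0"
  shows "norm (\<psi> x) = 1"
proof -
  have h: "norm (\<psi> x) ^ (card (UNIV::'a set) - 1) = 1 ^ (card (UNIV::'a set) - 1)"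
    by (simp only: norm_power[symmetric] mc_root[OF assms] norm_one power_one)
  have Q: "card (UNIV::'a set) - 1 > 0" using card_ge2[where 'a='a] by simp
  show ?thesis using power_eq_imp_eq_base[OF h _ _ Q] by simp
qed

lemma cnj_norm1: assumes "norm (z::complex) = 1" shows "cnj z = inverse z"
proof -
  have "z * cnj z = 1" using complex_norm_square[of z] assms by simp
  thus ?thesis by (simp add: inverse_unique)
qed

lemma mc_cnj: assumes "mult_char \<psi>" "(x::'a::{field,finite}) \<noteq> 0"
  shows "cnj (\<psi> x) = \<psi> (inverse x)"
  using cnj_norm1[OF mc_norm[OF assms]] mc_inverse[OF assms] by simp

lemma mc_ext: assumes "mult_char \<psi>" "mult_char \<phi>" "\<forall>x. x \<noteq> 0 \<longrightarrow> \<psi> x = \<phi> x"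
  shows "\<psi> = \<phi>"
proof
  fix x show "\<psi> x = \<phi> x"
  proof (cases "x = 0")
    case True
    have "(\<forall>x. x \<noteq> 0 \<longrightarrow> \<psi> x = 1) \<longleftrightarrow> (\<forall>x. x \<noteq> 0 \<longrightarrow> \<phi> x = 1)" using assms(3) by auto
    moreover have "\<psi> 0 = (if (\<forall>x. x \<noteq> 0 \<longrightarrow> \<psi> x = 1) then 1 else 0)"
       "\<phi> 0 = (if (\<forall>x. x \<noteq> 0 \<longrightarrow> \<phi> x = 1) then 1 else 0)"
      using assms(1,2) unfolding mult_char_def by blast+
    ultimately show ?thesis using True by simp
  qed (use assms(3) in simp)
qed

definition chr :: "complex \<Rightarrow> 'a::{field,finite} \<Rightarrow> complex" where
  "chr z x = (if x = 0 then (if z = 1 then 1 else 0) else z ^ dlog x)"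

lemma dlog_mult: assumes "(x::'a::{field,finite}) \<noteq> 0" "y \<noteq> 0"
  shows "dlog (x * y) mod (card (UNIV::'a set) - 1) = (dlog x + dlog y) mod (card (UNIV::'a set) - 1)"
proof -
  have "(gen::'a) ^ dlog (x * y) = gen ^ (dlog x + dlog y)"
    using dlog(2)[of x] dlog(2)[of y] dlog(2)[of "x*y"] assms by (simp add: power_add)
  thus ?thesis by (simp only: gen_pow_eq)
qed

lemma dlog_gen: "dlog (gen::'a::{field,finite}) mod (card (UNIV::'a set) - 1) = 1 mod (card (UNIV::'a set) - 1)"
proof -
  have "(gen::'a) ^ dlog (gen::'a) = gen ^ 1" using dlog(2)[OF gen_nz] by simp
  thus ?thesis by (simp only: gen_pow_eq)
qed

lemma dlog_one: "dlog (1::'a::{field,finite}) = 0"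
proof -
  have "(gen::'a) ^ dlog (1::'a) = gen ^ 0" using dlog(2)[of "1::'a"] by simp
  hence "dlog (1::'a) mod (card (UNIV::'a set) - 1) = 0 mod (card (UNIV::'a set) - 1)" by (simp only: gen_pow_eq)
  thus ?thesis using dlog(1)[of "1::'a"] by simp
qed

lemma chr_gen: assumes "z ^ (card (UNIV::'a::{field,finite} set) - 1) = 1"
  shows "chr z (gen::'a) = z"
proof -
  have "chr z (gen::'a) = z ^ dlog (gen::'a)" using gen_nz[where 'a='a] by (simp add: chr_def)
  also have "\<dots> = z ^ (dlog (gen::'a) mod (card (UNIV::'a set) - 1))" by (rule root_pow_mod[OF assms])
  also have "\<dots> = z ^ (1 mod (card (UNIV::'a set) - 1))" by (simp only: dlog_gen)
  also have "\<dots> = z ^ 1" by (rule root_pow_mod[OF assms, symmetric])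
  finally show ?thesis by simp
qed

lemma chr_mc: assumes "z ^ (card (UNIV::'a::{field,finite} set) - 1) = 1"
  shows "mult_char (chr z :: 'a \<Rightarrow> complex)"
proof -
  have Q: "card (UNIV::'a set) - 1 > 0" using card_ge2[where 'a='a] by simp
  have z0: "z \<noteq> 0" using assms Q by (metis power_0_left less_numeral_extra(3) zero_neq_one)
  have m: "chr z (x * y) = chr z x * chr z y" if "(x::'a) \<noteq> 0" "y \<noteq> 0" for x y
  proof -
    have "chr z (x * y) = z ^ dlog (x * y)" using that by (simp add: chr_def)
    also have "\<dots> = z ^ (dlog (x * y) mod (card (UNIV::'a set) - 1))" by (rule root_pow_mod[OF assms])
    also have "\<dots> = z ^ ((dlog x + dlog y) mod (card (UNIV::'a set) - 1))" by (simp only: dlog_mult[OF that])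
    also have "\<dots> = z ^ (dlog x + dlog y)" by (rule root_pow_mod[OF assms, symmetric])
    finally show ?thesis using that by (simp add: chr_def power_add)
  qed
  have t: "(\<forall>x::'a. x \<noteq> 0 \<longrightarrow> chr z x = 1) \<longleftrightarrow> z = 1"
  proof
    assume "\<forall>x::'a. x \<noteq> 0 \<longrightarrow> chr z x = 1"
    hence "chr z (gen::'a) = 1" using gen_nz by blast
    thus "z = 1" using chr_gen[OF assms] by simp
  qed (simp add: chr_def)
  show ?thesis unfolding mult_char_def
    using m z0 t by (auto simp: chr_def)
qed

lemma mc_is_chr: assumes "mult_char (\<psi> :: 'a::{field,finite} \<Rightarrow> complex)"
  shows "\<psi> = chr (\<psi> gen)" "\<psi> gen ^ (card (UNIV::'a set) - 1) = 1"
proof -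
  show r: "\<psi> gen ^ (card (UNIV::'a set) - 1) = 1" by (rule mc_root[OF assms gen_nz])
  show "\<psi> = chr (\<psi> gen)"
  proof (rule mc_ext[OF assms chr_mc[OF r]], intro allI impI)
    fix x :: 'a assume x: "x \<noteq> 0"
    have "\<psi> x = \<psi> (gen ^ dlog x)" using dlog(2)[OF x] by simp
    also have "\<dots> = \<psi> gen ^ dlog x" by (rule mc_pow[OF assms gen_nz])
    finally show "\<psi> x = chr (\<psi> gen) x" using x by (simp add: chr_def)
  qed
qed

lemma chars_eq: "{\<psi>. mult_char (\<psi> :: 'a::{field,finite} \<Rightarrow> complex)} = chr ` {z. z ^ (card (UNIV::'a set) - 1) = 1}"
proof
  show "{\<psi>. mult_char (\<psi> :: 'a \<Rightarrow> complex)} \<subseteq> chr ` {z. z ^ (card (UNIV::'a set) - 1) = 1}"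
  proof
    fix \<psi> :: "'a \<Rightarrow> complex" assume "\<psi> \<in> {\<psi>. mult_char \<psi>}"
    hence "mult_char \<psi>" by simp
    from mc_is_chr[OF this] show "\<psi> \<in> chr ` {z. z ^ (card (UNIV::'a set) - 1) = 1}" by blast
  qed
  show "chr ` {z. z ^ (card (UNIV::'a set) - 1) = 1} \<subseteq> {\<psi>. mult_char (\<psi> :: 'a \<Rightarrow> complex)}"
    using chr_mc by blast
qed

lemma chr_inj: "inj_on (chr :: complex \<Rightarrow> 'a::{field,finite} \<Rightarrow> complex) {z. z ^ (card (UNIV::'a set) - 1) = 1}"
proof (rule inj_onI)
  fix z w assume "z \<in> {z. z ^ (card (UNIV::'a set) - 1) = 1}" "w \<in> {z. z ^ (card (UNIV::'a set) - 1) = 1}"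
    and e: "(chr z :: 'a \<Rightarrow> complex) = chr w"
  hence "z = chr z (gen::'a)" "w = chr w (gen::'a)" using chr_gen by (metis mem_Collect_eq)+
  thus "z = w" using e by simp
qed


lemma roots_sum_pow:
  assumes "0 < d" "d < Q"
  shows "(\<Sum>z\<in>{z::complex. z ^ Q = 1}. z ^ d) = 0"
proof -
  let ?R = "{z::complex. z ^ Q = 1}"
  have Q: "Q > 0" using assms by simp
  define \<omega> where "\<omega> = cis (2 * pi / real Q)"
  let ?f = "\<lambda>k. cis (2 * pi * real k / real Q)"
  have wk: "\<omega> ^ k = ?f k" for k unfolding \<omega>_def by (simp add: DeMoivre mult_ac)
  have wR: "\<omega> ^ Q = 1" unfolding wk using Q by simp
  have "?f d \<noteq> ?f 0"
  proof
    assume e: "?f d = ?f 0"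
    have "d = 0" by (rule inj_onD[OF bij_betw_imp_inj_on[OF bij_betw_roots_unity[OF Q]] e]) (use assms in auto)
    thus False using assms by simp
  qed
  hence wd: "\<omega> ^ d \<noteq> 1" unfolding wk by simp
  have w0: "\<omega> \<noteq> 0" unfolding \<omega>_def by simp
  have bij: "bij_betw (\<lambda>z. \<omega> * z) ?R ?R"
  proof (rule bij_betwI[where g = "\<lambda>z. z / \<omega>"])
    show "(\<lambda>z. \<omega> * z) \<in> ?R \<rightarrow> ?R" using wR by (auto simp: power_mult_distrib)
    show "(\<lambda>z. z / \<omega>) \<in> ?R \<rightarrow> ?R" using wR by (auto simp: power_divide)
  qed (use w0 in auto)
  have "(\<Sum>z\<in>?R. z ^ d) = (\<Sum>z\<in>?R. (\<omega> * z) ^ d)"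
    using sum.reindex_bij_betw[OF bij, of "\<lambda>z. z ^ d"] by simp
  also have "\<dots> = \<omega> ^ d * (\<Sum>z\<in>?R. z ^ d)" by (simp add: power_mult_distrib sum_distrib_left)
  finally have "(1 - \<omega> ^ d) * (\<Sum>z\<in>?R. z ^ d) = 0" by (simp add: algebra_simps)
  thus ?thesis using wd by simp
qed

lemma finite_chars: "finite {\<psi>. mult_char (\<psi> :: 'a::{field,finite} \<Rightarrow> complex)}"
proof -
  have "card (UNIV::'a set) - 1 > 0" using card_ge2[where 'a='a] by simp
  hence "finite {z::complex. z ^ (card (UNIV::'a set) - 1) = 1}" by (intro finite_roots_unity) simp
  thus ?thesis unfolding chars_eq by simp
qed

lemma char_sum:
  assumes u: "(u::'a::{field,finite}) \<noteq> 0"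
  shows "(\<Sum>\<psi>\<in>{\<psi>. mult_char \<psi>}. \<psi> u) = (if u = 1 then of_nat (card (UNIV::'a set) - 1) else 0)"
proof -
  let ?Q = "card (UNIV::'a set) - 1"
  have Q: "?Q > 0" using card_ge2[where 'a='a] by simp
  have "(\<Sum>\<psi>\<in>{\<psi>. mult_char \<psi>}. \<psi> u) = (\<Sum>z\<in>{z::complex. z ^ ?Q = 1}. chr z u)"
    unfolding chars_eq by (rule sum.reindex[OF chr_inj, unfolded comp_def])
  also have "\<dots> = (\<Sum>z\<in>{z::complex. z ^ ?Q = 1}. z ^ dlog u)" using u by (simp add: chr_def)
  also have "\<dots> = (if u = 1 then of_nat ?Q else 0)"
  proof (cases "u = 1")
    case True
    thus ?thesis using card_roots_unity_eq[OF Q] by (simp add: dlog_one)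
  next
    case False
    have "dlog u \<noteq> 0"
    proof
      assume "dlog u = 0"
      with dlog(2)[OF u] have "u = 1" by simp
      with False show False by simp
    qed
    hence "(\<Sum>z\<in>{z::complex. z ^ ?Q = 1}. z ^ dlog u) = 0"
      using roots_sum_pow[of "dlog u" ?Q] dlog(1)[OF u] by simp
    thus ?thesis using False by simp
  qed
  finally show ?thesis .
qed

lemma chars0_eq:
  assumes "k0 dvd (card (UNIV::'a::{field,finite} set) - 1)"
  shows "{\<psi>. mult_char (\<psi> :: 'a \<Rightarrow> complex) \<and> (\<forall>x. x \<noteq> 0 \<longrightarrow> \<psi> x ^ k0 = 1)}
         = chr ` {z. z ^ k0 = 1}"
proof
  let ?Q = "card (UNIV::'a set) - 1"
  obtain m where m: "?Q = k0 * m" using assms by blast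
  show "{\<psi>. mult_char (\<psi> :: 'a \<Rightarrow> complex) \<and> (\<forall>x. x \<noteq> 0 \<longrightarrow> \<psi> x ^ k0 = 1)} \<subseteq> chr ` {z. z ^ k0 = 1}"
  proof
    fix \<psi> :: "'a \<Rightarrow> complex" assume "\<psi> \<in> {\<psi>. mult_char \<psi> \<and> (\<forall>x. x \<noteq> 0 \<longrightarrow> \<psi> x ^ k0 = 1)}"
    hence h: "mult_char \<psi>" "\<psi> gen ^ k0 = 1" using gen_nz[where 'a='a] by auto
    show "\<psi> \<in> chr ` {z. z ^ k0 = 1}" using mc_is_chr(1)[OF h(1)] h(2) by blast
  qed
  show "chr ` {z. z ^ k0 = 1} \<subseteq> {\<psi>. mult_char (\<psi> :: 'a \<Rightarrow> complex) \<and> (\<forall>x. x \<noteq> 0 \<longrightarrow> \<psi> x ^ k0 = 1)}"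
  proof
    fix \<psi> :: "'a \<Rightarrow> complex" assume "\<psi> \<in> chr ` {z. z ^ k0 = 1}"
    then obtain z where z: "z ^ k0 = 1" "\<psi> = chr z" by blast
    have zQ: "z ^ ?Q = 1" unfolding m by (simp add: power_mult z(1))
    have "\<forall>x::'a. x \<noteq> 0 \<longrightarrow> \<psi> x ^ k0 = 1"
    proof (intro allI impI)
      fix x :: 'a assume "x \<noteq> 0"
      hence "\<psi> x ^ k0 = (z ^ k0) ^ dlog x" by (simp add: z(2) chr_def power_mult[symmetric] mult.commute)
      thus "\<psi> x ^ k0 = 1" using z(1) by simp
    qed
    thus "\<psi> \<in> {\<psi>. mult_char (\<psi> :: 'a \<Rightarrow> complex) \<and> (\<forall>x. x \<noteq> 0 \<longrightarrow> \<psi> x ^ k0 = 1)}"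
      using chr_mc[OF zQ] z(2) by simp
  qed
qed

lemma card_chars0:
  assumes "k0 dvd (card (UNIV::'a::{field,finite} set) - 1)" "k0 > 0"
  shows "card {\<psi>. mult_char (\<psi> :: 'a \<Rightarrow> complex) \<and> (\<forall>x. x \<noteq> 0 \<longrightarrow> \<psi> x ^ k0 = 1)} = k0"
proof -
  let ?Q = "card (UNIV::'a set) - 1"
  obtain m where m: "?Q = k0 * m" using assms by blast
  have sub: "{z::complex. z ^ k0 = 1} \<subseteq> {z. z ^ ?Q = 1}" unfolding m by (auto simp: power_mult)
  have "inj_on (chr :: complex \<Rightarrow> 'a \<Rightarrow> complex) {z. z ^ k0 = 1}" by (rule inj_on_subset[OF chr_inj sub])
  thus ?thesis unfolding chars0_eq[OF assms(1)] using card_image card_roots_unity_eq[OF assms(2)] by metis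
qed


lemma card_filter_if:
  assumes "finite A"
  shows "(\<Sum>x\<in>A. if P x then (c::complex) else 0) = c * of_nat (card {x\<in>A. P x})"
proof -
  have "(\<Sum>x\<in>A. if P x then c else 0) = (\<Sum>x\<in>{x\<in>A. P x}. c)"
    by (rule sum.inter_filter[OF assms, symmetric])
  thus ?thesis by simp
qed

lemma final_alg:
  fixes Q k0 N0 N0s St :: complex
  assumes "Q \<noteq> 0"
  shows "N0 - N0s + St = k0 * Q ^ (n - 1) + N0 - (k0 + Q) / Q * N0s
           + (St - k0 * ((Q * Q ^ (n - 1) - N0s) / Q))"
  using assms by (simp add: field_simps)

theorem lemma1:
  fixes n k :: nat and m kk :: "nat \<Rightarrow> nat" and b :: "'a::{field,finite}"
    and a :: "nat \<Rightarrow> 'a"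
  assumes "n \<ge> 2"
    and "\<forall>i<n. a i \<noteq> 0" and "b \<noteq> 0"
    and "k > 0" and "\<forall>i<n. kk i > 0" and "\<forall>i<n. m i > 0"
  defines "q \<equiv> card (UNIV :: 'a set)"
  defines "N \<equiv> card {x \<in> Pi\<^sub>E {..<n} (\<lambda>_. UNIV).
                 diag_form n a m x ^ k = b * (\<Prod>i<n. x i ^ kk i)}"
  defines "N0 \<equiv> card {x \<in> Pi\<^sub>E {..<n} (\<lambda>_. UNIV). diag_form n a m x = 0}"
  defines "N0s \<equiv> card {x \<in> Pi\<^sub>E {..<n} (\<lambda>_. UNIV - {0}). diag_form n a m x = 0}"
  defines "k0 \<equiv> Gcd (insert k (insert (q - 1) (kk ` {..<n})))"
  shows "(\<not> (\<exists>y. b = y ^ k0) \<longrightarrow> int N = int N0 - int N0s) \<and>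
         ((\<exists>y. b = y ^ k0) \<longrightarrow>
            (of_nat N :: complex) =
              of_nat k0 * (of_nat q - 1) ^ (n - 1) + of_nat N0
              - (of_nat k0 + of_nat q - 1) / (of_nat q - 1) * of_nat N0s
              + (\<Sum>\<psi> \<in> {\<psi>. mult_char \<psi> \<and> \<not> (\<forall>x. x \<noteq> 0 \<longrightarrow> \<psi> x ^ k0 = 1)}.
                   \<psi> b * T_sum n a m kk k \<psi>))"
proof -
  let ?Q = "card (UNIV::'a set) - 1"
  let ?D = "diag_form n a m"
  have Qpos: "?Q > 0" using card_ge2[where 'a='a] by simp
  have q2: "q \<ge> 2" unfolding q_def by (rule card_ge2)
  have qQ: "q - 1 = ?Q" unfolding q_def ..
  have k0k: "k0 dvd k" unfolding k0_def by (rule Gcd_dvd) simp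
  have k0Q: "k0 dvd ?Q" unfolding k0_def qQ[symmetric] by (rule Gcd_dvd) simp
  have k0kk: "k0 dvd kk i" if "i < n" for i unfolding k0_def by (rule Gcd_dvd) (use that in simp)
  have k0pos: "k0 > 0"
  proof -
    have "k0 \<noteq> 0" unfolding k0_def using assms(4) by (simp add: Gcd_0_iff)
    thus ?thesis by simp
  qed
  define F where "F = Pi\<^sub>E {..<n} (\<lambda>_. UNIV - {0::'a})"
  define A where "A = {x\<in>F. ?D x \<noteq> 0}"
  define St where "St = {x\<in>F. ?D x ^ k = b * (\<Prod>i<n. x i ^ kk i)}"
  define Z where "Z = {x \<in> Pi\<^sub>E {..<n} (\<lambda>_. UNIV). ?D x = (0::'a)}"
  define Zs where "Zs = {x\<in>F. ?D x = 0}"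
  have finF: "finite F" unfolding F_def by (rule finite_PiE) auto
  have finZ: "finite Z" unfolding Z_def by (rule finite_subset[of _ "Pi\<^sub>E {..<n} (\<lambda>_. UNIV)"]) (auto intro: finite_PiE)
  have FU: "F \<subseteq> Pi\<^sub>E {..<n} (\<lambda>_. UNIV)" unfolding F_def by (rule PiE_mono) auto
  have ZsZ: "Zs \<subseteq> Z" unfolding Zs_def Z_def using FU by auto
  have N0s_eq: "N0s = card Zs" unfolding N0s_def Zs_def F_def ..
  have N0_eq: "N0 = card Z" unfolding N0_def Z_def ..
  have memF: "x \<in> F \<longleftrightarrow> (\<forall>i<n. x i \<noteq> 0)" if "x \<in> Pi\<^sub>E {..<n} (\<lambda>_. UNIV)" for x
    using that unfolding F_def by (auto simp: PiE_iff)
  have prod_nz: "(\<Prod>i<n. x i ^ kk i) \<noteq> 0 \<longleftrightarrow> (\<forall>i<n. x i \<noteq> 0)" for x :: "nat \<Rightarrow> 'a"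
    using assms(5) by (auto simp: prod_zero_iff)
  have S_eq: "{x \<in> Pi\<^sub>E {..<n} (\<lambda>_. UNIV). ?D x ^ k = b * (\<Prod>i<n. x i ^ kk i)} = (Z - Zs) \<union> St"
  proof (intro Set.set_eqI iffI)
    fix x assume x: "x \<in> {x \<in> Pi\<^sub>E {..<n} (\<lambda>_. UNIV). ?D x ^ k = b * (\<Prod>i<n. x i ^ kk i)}"
    hence xU: "x \<in> Pi\<^sub>E {..<n} (\<lambda>_. UNIV)" and e: "?D x ^ k = b * (\<Prod>i<n. x i ^ kk i)" by auto
    show "x \<in> (Z - Zs) \<union> St"
    proof (cases "\<forall>i<n. x i \<noteq> 0")
      case True thus ?thesis using memF[OF xU] e unfolding St_def by auto
    next
      case False
      hence "(\<Prod>i<n. x i ^ kk i) = 0" using prod_nz by blast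
      hence "?D x ^ k = 0" using e by simp
      hence "?D x = 0" using assms(4) by simp
      thus ?thesis using False memF[OF xU] xU unfolding Z_def Zs_def by auto
    qed
  next
    fix x assume "x \<in> (Z - Zs) \<union> St"
    thus "x \<in> {x \<in> Pi\<^sub>E {..<n} (\<lambda>_. UNIV). ?D x ^ k = b * (\<Prod>i<n. x i ^ kk i)}"
    proof
      assume x: "x \<in> Z - Zs"
      hence xU: "x \<in> Pi\<^sub>E {..<n} (\<lambda>_. UNIV)" and d: "?D x = 0" and nF: "x \<notin> F"
        unfolding Z_def Zs_def by auto
      hence p0: "(\<Prod>i<n. x i ^ kk i) = 0" using memF[OF xU] prod_nz by blast
      have "?D x ^ k = b * (\<Prod>i<n. x i ^ kk i)"
        by (simp only: d p0 mult_zero_right) (simp add: assms(4))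
      thus ?thesis using xU by simp
    next
      assume "x \<in> St" thus ?thesis using FU unfolding St_def by auto
    qed
  qed
  have StF: "St \<subseteq> F" unfolding St_def by auto
  have finSt: "finite St" using finite_subset[OF StF finF] .
  have disj: "(Z - Zs) \<inter> St = {}" unfolding Zs_def St_def Z_def by auto
  have N_eq: "N = (N0 - N0s) + card St"
  proof -
    have "N = card ((Z - Zs) \<union> St)" unfolding N_def S_eq ..
    also have "\<dots> = card (Z - Zs) + card St" using disj finZ finSt by (intro card_Un_disjoint) auto
    also have "card (Z - Zs) = N0 - N0s" unfolding N0_eq N0s_eq
      by (rule card_Diff_subset[OF finite_subset[OF ZsZ finZ] ZsZ])
    finally show ?thesis .
  qed
  have N0s_le: "N0s \<le> N0" unfolding N0_eq N0s_eq by (rule card_mono[OF finZ ZsZ])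
  have nonpow: "St = {}" if np: "\<not> (\<exists>y. b = y ^ k0)"
  proof (rule ccontr)
    assume "St \<noteq> {}"
    then obtain x where x: "x \<in> F" "?D x ^ k = b * (\<Prod>i<n. x i ^ kk i)" unfolding St_def by auto
    have xnz: "\<forall>i<n. x i \<noteq> 0" using x(1) unfolding F_def by (auto simp: PiE_iff)
    obtain k' where k': "k = k0 * k'" using k0k by blast
    define t where "t i = kk i div k0" for i
    have t: "kk i = k0 * t i" if "i < n" for i using k0kk[OF that] by (simp add: t_def)
    have P: "(\<Prod>i<n. x i ^ kk i) = (\<Prod>i<n. x i ^ t i) ^ k0"
    proof -
      have "(\<Prod>i<n. x i ^ t i) ^ k0 = (\<Prod>i<n. (x i ^ t i) ^ k0)" by (rule prod_power_distrib)
      also have "\<dots> = (\<Prod>i<n. x i ^ kk i)"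
      proof (rule prod.cong[OF refl])
        fix i assume "i \<in> {..<n}"
        hence "kk i = k0 * t i" using t by simp
        thus "(x i ^ t i) ^ k0 = x i ^ kk i" by (simp add: power_mult[symmetric] mult.commute)
      qed
      finally show ?thesis by simp
    qed
    have Pnz: "(\<Prod>i<n. x i ^ t i) \<noteq> 0" using xnz by (simp add: prod_zero_iff)
    have "b = ?D x ^ k / (\<Prod>i<n. x i ^ kk i)" using x(2) prod_nz xnz by auto
    also have "\<dots> = (?D x ^ k' / (\<Prod>i<n. x i ^ t i)) ^ k0"
      unfolding P k' by (simp add: power_divide power_mult mult.commute)
    finally show False using np by blast
  qed
  show ?thesis
  proof (intro conjI impI)
    assume np: "\<not> (\<exists>y. b = y ^ k0)"
    show "int N = int N0 - int N0s" using N_eq nonpow[OF np] N0s_le by simp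
  next
    assume "\<exists>y. b = y ^ k0"
    then obtain y where y: "b = y ^ k0" by blast
    have yz: "y \<noteq> 0" using y assms(3) k0pos by auto
    let ?CC = "{\<psi>. mult_char (\<psi>::'a \<Rightarrow> complex)}"
    let ?CZ = "{\<psi>. mult_char (\<psi>::'a \<Rightarrow> complex) \<and> (\<forall>x. x \<noteq> 0 \<longrightarrow> \<psi> x ^ k0 = 1)}"
    let ?T = "T_sum n a m kk k"
    let ?g = "\<lambda>\<psi> x. (\<Prod>i<n. \<psi> (x i) ^ kk i) * cnj (\<psi> (?D x)) ^ k"
    have cQ: "(of_nat (card (UNIV::'a set)) - 1 :: complex) = of_nat ?Q" using Qpos by (simp add: of_nat_diff)
    have Qnz: "(of_nat ?Q :: complex) \<noteq> 0" using Qpos by simp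
    have Tdef: "?T \<psi> = (1 / of_nat ?Q) * (\<Sum>x\<in>A. ?g \<psi> x)" for \<psi>
      by (simp only: T_sum_def A_def F_def cQ)
    have memA: "\<forall>i<n. x i \<noteq> 0" "?D x \<noteq> 0" if "x \<in> A" for x
      using that unfolding A_def F_def by (auto simp: PiE_iff)
    define u where "u x = b * (\<Prod>i<n. x i ^ kk i) * inverse (?D x ^ k)" for x
    have unz: "u x \<noteq> 0" if "x \<in> A" for x
      using memA[OF that] prod_nz assms(3) unfolding u_def by auto
    have key: "\<psi> b * ?g \<psi> x = \<psi> (u x)" if \<psi>: "mult_char \<psi>" and x: "x \<in> A" for \<psi> x
    proof -
      note xnz = memA(1)[OF x] and dnz = memA(2)[OF x]
      have "(\<Prod>i<n. \<psi> (x i) ^ kk i) = (\<Prod>i<n. \<psi> (x i ^ kk i))"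
        by (rule prod.cong) (simp_all add: mc_pow[OF \<psi>] xnz)
      also have "\<dots> = \<psi> (\<Prod>i<n. x i ^ kk i)" by (rule mc_prod[OF \<psi>, symmetric]) (use xnz in auto)
      finally have p1: "(\<Prod>i<n. \<psi> (x i) ^ kk i) = \<psi> (\<Prod>i<n. x i ^ kk i)" .
      have "cnj (\<psi> (?D x)) ^ k = \<psi> (inverse (?D x)) ^ k" using mc_cnj[OF \<psi> dnz] by simp
      also have "\<dots> = \<psi> (inverse (?D x) ^ k)" using dnz by (simp add: mc_pow[OF \<psi>])
      also have "\<dots> = \<psi> (inverse (?D x ^ k))" by (simp add: power_inverse)
      finally have p2: "cnj (\<psi> (?D x)) ^ k = \<psi> (inverse (?D x ^ k))" .
      have Pnz: "(\<Prod>i<n. x i ^ kk i) \<noteq> 0" using prod_nz xnz by blast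
      have Inz: "inverse (?D x ^ k) \<noteq> 0" using dnz by simp
      have "\<psi> (u x) = \<psi> (b * (\<Prod>i<n. x i ^ kk i)) * \<psi> (inverse (?D x ^ k))"
        unfolding u_def by (rule mc_mult[OF \<psi>]) (use Pnz assms(3) Inz in auto)
      also have "\<psi> (b * (\<Prod>i<n. x i ^ kk i)) = \<psi> b * \<psi> (\<Prod>i<n. x i ^ kk i)"
        by (rule mc_mult[OF \<psi> assms(3) Pnz])
      finally show ?thesis unfolding p1 p2 by (simp add: mult_ac)
    qed
    have u1: "u x = 1 \<longleftrightarrow> ?D x ^ k = b * (\<Prod>i<n. x i ^ kk i)" if "x \<in> A" for x
    proof -
      have "?D x ^ k \<noteq> 0" using memA(2)[OF that] by simp
      thus ?thesis unfolding u_def by (auto simp: field_simps)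
    qed
    have finA: "finite A" unfolding A_def using finF by simp
    have StA: "St = {x\<in>A. u x = 1}"
    proof -
      have "St = {x\<in>A. ?D x ^ k = b * (\<Prod>i<n. x i ^ kk i)}"
      proof (intro Set.set_eqI iffI)
        fix x assume "x \<in> St"
        hence xF: "x \<in> F" and e: "?D x ^ k = b * (\<Prod>i<n. x i ^ kk i)" unfolding St_def by auto
        have "\<forall>i<n. x i \<noteq> 0" using xF unfolding F_def by (auto simp: PiE_iff)
        hence Pn: "(\<Prod>i<n. x i ^ kk i) \<noteq> 0" using prod_nz by blast
        have "b * (\<Prod>i<n. x i ^ kk i) \<noteq> 0" using assms(3) Pn by (metis mult_eq_0_iff)
        hence "?D x ^ k \<noteq> 0" unfolding e .
        hence "?D x \<noteq> 0" using assms(4) by auto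
        thus "x \<in> {x\<in>A. ?D x ^ k = b * (\<Prod>i<n. x i ^ kk i)}" using xF e unfolding A_def by auto
      next
        fix x assume "x \<in> {x\<in>A. ?D x ^ k = b * (\<Prod>i<n. x i ^ kk i)}"
        thus "x \<in> St" unfolding A_def St_def by auto
      qed
      also have "\<dots> = {x\<in>A. u x = 1}" using u1 by blast
      finally show ?thesis .
    qed
    have sumC: "(\<Sum>\<psi>\<in>?CC. \<psi> b * ?T \<psi>) = of_nat (card St)"
    proof -
      have "(\<Sum>\<psi>\<in>?CC. \<psi> b * ?T \<psi>) = (\<Sum>\<psi>\<in>?CC. \<Sum>x\<in>A. (1 / of_nat ?Q) * (\<psi> b * ?g \<psi> x))"
        by (simp add: Tdef sum_distrib_left mult_ac)
      also have "\<dots> = (\<Sum>x\<in>A. \<Sum>\<psi>\<in>?CC. (1 / of_nat ?Q) * (\<psi> b * ?g \<psi> x))"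
        by (rule sum.swap)
      also have "\<dots> = (\<Sum>x\<in>A. (1 / of_nat ?Q) * (\<Sum>\<psi>\<in>?CC. \<psi> (u x)))"
      proof (rule sum.cong[OF refl])
        fix x assume x: "x \<in> A"
        have "(\<Sum>\<psi>\<in>?CC. (1 / of_nat ?Q) * (\<psi> b * ?g \<psi> x)) = (\<Sum>\<psi>\<in>?CC. (1 / of_nat ?Q) * \<psi> (u x))"
          by (rule sum.cong[OF refl]) (simp add: key x)
        thus "(\<Sum>\<psi>\<in>?CC. (1 / of_nat ?Q) * (\<psi> b * ?g \<psi> x)) = (1 / of_nat ?Q) * (\<Sum>\<psi>\<in>?CC. \<psi> (u x))"
          by (simp add: sum_distrib_left)
      qed
      also have "\<dots> = (\<Sum>x\<in>A. if u x = 1 then 1 else 0)"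
      proof (rule sum.cong[OF refl])
        fix x assume x: "x \<in> A"
        show "(1 / of_nat ?Q) * (\<Sum>\<psi>\<in>?CC. \<psi> (u x)) = (if u x = 1 then 1 else 0)"
          unfolding char_sum[OF unz[OF x]] using Qnz by simp
      qed
      also have "\<dots> = of_nat (card {x\<in>A. u x = 1})" using card_filter_if[OF finA, of "\<lambda>x. u x = 1" 1] by simp
      finally show ?thesis unfolding StA .
    qed
    have T0: "?T \<psi> = of_nat (card A) / of_nat ?Q" if "\<psi> \<in> ?CZ" for \<psi>
    proof -
      have \<psi>: "mult_char \<psi>" and r: "\<forall>x. x \<noteq> 0 \<longrightarrow> \<psi> x ^ k0 = 1" using that by auto
      have g1: "?g \<psi> x = 1" if x: "x \<in> A" for x
      proof -
        note xnz = memA(1)[OF x] and dnz = memA(2)[OF x]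
        have "(\<Prod>i<n. \<psi> (x i) ^ kk i) = (\<Prod>i<n. 1)"
        proof (rule prod.cong[OF refl])
          fix i assume "i \<in> {..<n}"
          hence i: "i < n" by simp
          obtain t where t: "kk i = k0 * t" using k0kk[OF i] by blast
          show "\<psi> (x i) ^ kk i = 1" unfolding t power_mult using r xnz i by simp
        qed
        moreover have "cnj (\<psi> (?D x)) ^ k = 1"
        proof -
          obtain k' where k': "k = k0 * k'" using k0k by blast
          have "cnj (\<psi> (?D x)) ^ k = cnj ((\<psi> (?D x) ^ k0) ^ k')"
            unfolding k' power_mult by simp
          thus ?thesis using r dnz by simp
        qed
        ultimately show ?thesis by simp
      qed
      have "(\<Sum>x\<in>A. ?g \<psi> x) = (\<Sum>x\<in>A. 1)" by (rule sum.cong[OF refl]) (simp add: g1)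
      thus ?thesis unfolding Tdef by simp
    qed
    have Sb: "\<psi> b = 1" if "\<psi> \<in> ?CZ" for \<psi>
    proof -
      have \<psi>: "mult_char \<psi>" and r: "\<forall>x. x \<noteq> 0 \<longrightarrow> \<psi> x ^ k0 = 1" using that by auto
      have "\<psi> b = \<psi> y ^ k0" unfolding y by (rule mc_pow[OF \<psi> yz])
      thus ?thesis using r yz by simp
    qed
    have sumC0: "(\<Sum>\<psi>\<in>?CZ. \<psi> b * ?T \<psi>) = of_nat k0 * (of_nat (card A) / of_nat ?Q)"
    proof -
      have "(\<Sum>\<psi>\<in>?CZ. \<psi> b * ?T \<psi>) = (\<Sum>\<psi>\<in>?CZ. of_nat (card A) / of_nat ?Q)"
        by (rule sum.cong[OF refl]) (simp add: T0 Sb)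
      thus ?thesis using card_chars0[OF k0Q k0pos] by simp
    qed
    have C0C: "?CZ \<subseteq> ?CC" by auto
    have setEq: "{\<psi>. mult_char \<psi> \<and> \<not> (\<forall>x. x \<noteq> 0 \<longrightarrow> \<psi> x ^ k0 = 1)} = ?CC - ?CZ" by auto
    have sumdiff: "(\<Sum>\<psi>\<in>?CC - ?CZ. \<psi> b * ?T \<psi>) = (\<Sum>\<psi>\<in>?CC. \<psi> b * ?T \<psi>) - (\<Sum>\<psi>\<in>?CZ. \<psi> b * ?T \<psi>)"
      by (rule sum_diff[OF finite_chars C0C])
    have cardF: "card F = ?Q ^ n" unfolding F_def by (simp add: card_PiE card_nz)
    have FAZ: "F = A \<union> Zs" "A \<inter> Zs = {}" unfolding A_def Zs_def by auto
    have cardAZ: "card A + N0s = ?Q ^ n"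
      unfolding N0s_eq cardF[symmetric] FAZ(1)
      by (rule card_Un_disjoint[symmetric]) (use finF FAZ in auto)
    have nN: "(of_nat N :: complex) = of_nat N0 - of_nat N0s + of_nat (card St)"
      using N_eq N0s_le by (simp add: of_nat_diff)
    have nA: "(of_nat (card A) :: complex) = of_nat ?Q ^ n - of_nat N0s"
    proof -
      have "(of_nat (card A) :: complex) + of_nat N0s = of_nat ?Q ^ n"
        using arg_cong[OF cardAZ, of "of_nat :: nat \<Rightarrow> complex"] by simp
      thus ?thesis by (simp add: algebra_simps)
    qed
    have qc: "(of_nat q - 1 :: complex) = of_nat ?Q" unfolding q_def by (rule cQ)
    have qk: "(of_nat k0 + of_nat q - 1 :: complex) = of_nat k0 + of_nat ?Q" using qc by (simp add: algebra_simps)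
    have Qn: "(of_nat ?Q :: complex) ^ n = of_nat ?Q * of_nat ?Q ^ (n - 1)"
      using assms(1) by (cases n) auto
    show "(of_nat N :: complex) =
              of_nat k0 * (of_nat q - 1) ^ (n - 1) + of_nat N0
              - (of_nat k0 + of_nat q - 1) / (of_nat q - 1) * of_nat N0s
              + (\<Sum>\<psi> \<in> {\<psi>. mult_char \<psi> \<and> \<not> (\<forall>x. x \<noteq> 0 \<longrightarrow> \<psi> x ^ k0 = 1)}.
                   \<psi> b * T_sum n a m kk k \<psi>)"
      unfolding setEq sumdiff sumC sumC0 nN nA qc qk Qn
      by (rule final_alg[OF Qnz])
  qed
qed

end
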